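(* Let $\{(a_i,b_i,m_i,n_i):i\in\mathbb{Z}\}$ be a positive ABMN solution and $\phi_i=\frac{n_{i-1}-n_i}{m_i-m_{i-1}}$. Then for every $i\in\mathbb{Z}$: $\frac{m_i-m_{i-1}}{m_{i+1}-m_{i-1}}=\frac{1}{c(\phi_i)}$, $\quad\frac{n_{i-1}-n_i}{n_{i-1}-n_{i+1}}=\frac{1}{d(\phi_i)}$, $\quad s(\phi_i)=\phi_{i+1}$.
   Context: ABMN system on $\mathbb{Z}$: real variables $a_i,b_i\ge0$, $m_i,n_i$ with, for all $i$, $(a_i+b_i)(m_i+a_i)=a_im_{i+1}+b_im_{i-1}$, $(a_i+b_i)(n_i+b_i)=a_in_{i+1}+b_in_{i-1}$, $(a_i+b_i)^2=b_i(m_{i+1}-m_{i-1})$, $(a_i+b_i)^2=a_i(n_{i-1}-n_{i+1})$; positive if all $a_i,b_i>0$ (then $m$ is strictly increasing and $n$ strictly decreasing). For $x>0$ let $\omega=\sqrt{8x+1}$, $c(x)=\frac{(\omega+3)^2}{16}$, $d(x)=\frac{(\omega+3)^2}{8(\omega+1)}$, $s(x)=\frac{(\omega-1)^2}{4(\omega+7)}$. *)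

theory Defs
  imports Complex_Main
begin

definition ABMN_solution :: "(int \<Rightarrow> real) \<Rightarrow> (int \<Rightarrow> real) \<Rightarrow> (int \<Rightarrow> real) \<Rightarrow> (int \<Rightarrow> real) \<Rightarrow> bool" where
  "ABMN_solution a b m n \<longleftrightarrow>
     (\<forall>i. a i \<ge> 0 \<and> b i \<ge> 0 \<and>
       (a i + b i) * (m i + a i) = a i * m (i + 1) + b i * m (i - 1) \<and>
       (a i + b i) * (n i + b i) = a i * n (i + 1) + b i * n (i - 1) \<and>
       (a i + b i)^2 = b i * (m (i + 1) - m (i - 1)) \<and>
       (a i + b i)^2 = a i * (n (i - 1) - n (i + 1)))"

definition positive_ABMN_solution :: "(int \<Rightarrow> real) \<Rightarrow> (int \<Rightarrow> real) \<Rightarrow> (int \<Rightarrow> real) \<Rightarrow> (int \<Rightarrow> real) \<Rightarrow> bool" where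
  "positive_ABMN_solution a b m n \<longleftrightarrow> ABMN_solution a b m n \<and> (\<forall>i. a i > 0 \<and> b i > 0)"

definition omega_fn :: "real \<Rightarrow> real" where
  "omega_fn x = sqrt (8 * x + 1)"

definition c_fn :: "real \<Rightarrow> real" where
  "c_fn x = (omega_fn x + 3)^2 / 16"

definition d_fn :: "real \<Rightarrow> real" where
  "d_fn x = (omega_fn x + 3)^2 / (8 * (omega_fn x + 1))"

definition s_fn :: "real \<Rightarrow> real" where
  "s_fn x = (omega_fn x - 1)^2 / (4 * (omega_fn x + 7))"

end

theory Submission
  imports Defs
begin

lemma diffs:
  fixes A B m0 m1 m2 n0 n1 n2 :: real
  assumes A: "A > 0" and B: "B > 0"
    and e1: "(A + B) * (m1 + A) = A * m2 + B * m0"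
    and e2: "(A + B) * (n1 + B) = A * n2 + B * n0"
    and e3: "(A + B)^2 = B * (m2 - m0)"
    and e4: "(A + B)^2 = A * (n0 - n2)"
  shows "m1 - m0 = A^2 / B" "m2 - m1 = B + 2*A" "n0 - n1 = A + 2*B" "n1 - n2 = B^2/A"
proof -
  have h1: "(A+B) * (B * (m1 - m0)) = (A+B) * A^2"
  proof -
    have "(A+B)*(m1-m0) = A*(m2-m0) - (A+B)*A" using e1 by (simp add: algebra_simps)
    hence "B*((A+B)*(m1-m0)) = B*(A*(m2-m0) - (A+B)*A)" by simp
    also have "\<dots> = A*(B*(m2-m0)) - B*(A+B)*A" by (simp add: algebra_simps)
    also have "\<dots> = A*(A+B)^2 - B*(A+B)*A" using e3 by simp
    finally show ?thesis by (simp add: algebra_simps power2_eq_square)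
  qed
  have p: "B * (m1 - m0) = A^2" using h1 A B by simp
  show "m1 - m0 = A^2 / B" using p B by (simp add: field_simps)
  show "m2 - m1 = B + 2*A"
  proof -
    have "B*(m2 - m1) = B*(B+2*A)" using p e3 by (simp add: algebra_simps power2_eq_square)
    thus ?thesis using B by simp
  qed
  have h2: "(A+B) * (A * (n1 - n2)) = (A+B) * B^2"
  proof -
    have "(A+B)*(n1-n2) = B*(n0-n2) - (A+B)*B" using e2 by (simp add: algebra_simps)
    hence "A*((A+B)*(n1-n2)) = A*(B*(n0-n2) - (A+B)*B)" by simp
    also have "\<dots> = B*(A*(n0-n2)) - A*(A+B)*B" by (simp add: algebra_simps)
    also have "\<dots> = B*(A+B)^2 - A*(A+B)*B" using e4 by simp
    finally show ?thesis by (simp add: algebra_simps power2_eq_square)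
  qed
  have v: "A * (n1 - n2) = B^2" using h2 A B by simp
  show "n1 - n2 = B^2/A" using v A by (simp add: field_simps)
  show "n0 - n1 = A + 2*B"
  proof -
    have "A*(n0 - n1) = A*(A+2*B)" using v e4 by (simp add: algebra_simps power2_eq_square)
    thus ?thesis using A by simp
  qed
qed

lemma fns:
  fixes A B :: real
  assumes A: "A > 0" and B: "B > 0"
  shows "omega_fn ((A + 2*B) * B / A^2) = 4*B/A + 1"
proof -
  have "8 * ((A + 2*B) * B / A^2) + 1 = (4*B/A+1)^2" using A by (simp add: field_simps power2_eq_square)
  moreover have "4*B/A+1 \<ge> 0" using A B by simp
  ultimately show ?thesis unfolding omega_fn_def by simp
qed

lemma cancel16:
  fixes A P Q :: real
  assumes "A \<noteq> 0" "Q \<noteq> 0"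
  shows "16*P/A^2 / (16*Q/A) = P/(A*Q)"
proof -
  have "16*P/A^2 / (16*Q/A) = (16*P/A^2) * (A/(16*Q))" by simp
  also have "\<dots> = (16*A) * P / ((16*A) * (A*Q))" by (simp add: power2_eq_square ac_simps)
  also have "\<dots> = P/(A*Q)" using assms by (rule_tac mult_divide_mult_cancel_left) simp
  finally show ?thesis .
qed

theorem mainTheorem11:
  fixes a b m n :: "int \<Rightarrow> real" and \<phi> :: "int \<Rightarrow> real"
  assumes "positive_ABMN_solution a b m n"
    and "\<And>i. \<phi> i = (n (i - 1) - n i) / (m i - m (i - 1))"
  shows "\<forall>i. (m i - m (i - 1)) / (m (i + 1) - m (i - 1)) = 1 / c_fn (\<phi> i)
            \<and> (n (i - 1) - n i) / (n (i - 1) - n (i + 1)) = 1 / d_fn (\<phi> i)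
            \<and> s_fn (\<phi> i) = \<phi> (i + 1)"
proof
  fix i
  define A where "A = a i"
  define B where "B = b i"
  have A: "A > 0" and B: "B > 0" using assms(1) unfolding positive_ABMN_solution_def A_def B_def by auto
  have E: "(A + B) * (m i + A) = A * m (i + 1) + B * m (i - 1)"
     "(A + B) * (n i + B) = A * n (i + 1) + B * n (i - 1)"
     "(A + B)^2 = B * (m (i + 1) - m (i - 1))"
     "(A + B)^2 = A * (n (i - 1) - n (i + 1))"
  proof -
    have all: "\<forall>i. a i \<ge> 0 \<and> b i \<ge> 0 \<and>
       (a i + b i) * (m i + a i) = a i * m (i + 1) + b i * m (i - 1) \<and>
       (a i + b i) * (n i + b i) = a i * n (i + 1) + b i * n (i - 1) \<and>
       (a i + b i)^2 = b i * (m (i + 1) - m (i - 1)) \<and>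
       (a i + b i)^2 = a i * (n (i - 1) - n (i + 1))"
      using assms(1) unfolding positive_ABMN_solution_def ABMN_solution_def by blast
    show "(A + B) * (m i + A) = A * m (i + 1) + B * m (i - 1)"
     "(A + B) * (n i + B) = A * n (i + 1) + B * n (i - 1)"
     "(A + B)^2 = B * (m (i + 1) - m (i - 1))"
     "(A + B)^2 = A * (n (i - 1) - n (i + 1))"
      unfolding A_def B_def using all[rule_format, of i] by blast+
  qed
  note D = diffs[OF A B E]
  have m02: "m (i + 1) - m (i - 1) = (A+B)^2/B" using D B by (simp add: field_simps power2_eq_square)
  have n02: "n (i - 1) - n (i + 1) = (A+B)^2/A" using D A by (simp add: field_simps power2_eq_square)
  have phi: "\<phi> i = (A + 2*B) * B / A^2" using assms(2)[of i] D B by (simp add: field_simps power2_eq_square)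
  have phi1: "\<phi> (i+1) = B^2 / (A * (B + 2*A))"
  proof -
    have "\<phi> (i+1) = (n i - n (i+1)) / (m (i+1) - m i)" using assms(2)[of "i+1"] by simp
    also have "\<dots> = (B^2/A) / (B + 2*A)" using D(2) D(4) by simp
    finally show ?thesis by simp
  qed
  have om: "omega_fn (\<phi> i) = 4*B/A + 1" using fns[OF A B] phi by simp
  show "(m i - m (i - 1)) / (m (i + 1) - m (i - 1)) = 1 / c_fn (\<phi> i)
            \<and> (n (i - 1) - n i) / (n (i - 1) - n (i + 1)) = 1 / d_fn (\<phi> i)
            \<and> s_fn (\<phi> i) = \<phi> (i + 1)"
  proof -
    have nz: "A \<noteq> 0" "B \<noteq> 0" "A + B \<noteq> 0" "A + 2*B \<noteq> 0" "B + 2*A \<noteq> 0" using A B by auto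
    have h1: "(4*B/A+1+3)^2/16 = (A+B)^2/A^2" using nz by (simp add: field_simps power2_eq_square)
    have h2a: "(4*B/A+1+3)^2 = 16*(A+B)^2/A^2" using nz by (simp add: field_simps power2_eq_square)
    have h2b: "8*(4*B/A+1+1) = 16*(A+2*B)/A" using nz by (simp add: field_simps)
    have h2: "(4*B/A+1+3)^2/(8*(4*B/A+1+1)) = (A+B)^2/(A*(A+2*B))" unfolding h2a h2b
    proof -
      have "16*(A+B)^2/A^2 / (16*(A+2*B)/A) = (16*(A+B)^2/A^2) * (A/(16*(A+2*B)))" by simp
      also have "\<dots> = (16*A) * (A+B)^2 / (A^2 * (16*(A+2*B)))" by (simp add: ac_simps)
      also have "\<dots> = (16*A) * (A+B)^2 / ((16*A) * (A*(A+2*B)))" by (simp add: power2_eq_square ac_simps)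
      also have "\<dots> = (A+B)^2/(A*(A+2*B))" using nz by (rule_tac mult_divide_mult_cancel_left) simp
      finally show "16*(A+B)^2/A^2 / (16*(A+2*B)/A) = (A+B)^2/(A*(A+2*B))" .
    qed
    have h3a: "(4*B/A+1-1)^2 = 16*B^2/A^2" using nz by (simp add: field_simps power2_eq_square)
    have h3b: "4*(4*B/A+1+7) = 16*(B+2*A)/A" using nz by (simp add: field_simps)
    have h3: "(4*B/A+1-1)^2/(4*(4*B/A+1+7)) = B^2/(A*(B+2*A))" unfolding h3a h3b
      using nz by (rule_tac cancel16) auto
    show ?thesis
      unfolding c_fn_def d_fn_def s_fn_def om m02 n02 D(1) D(3) phi1 h1 h2 h3 using nz
      by (simp add: field_simps)
  qed
qed

end
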